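(* Let $k\ge 3$ be odd and let $G=(V,E)$ be a $k$-uniform hyperstar of size $d\ge 2$, with $V=[n]$, $E=\{e_1,\ldots,e_d\}$, and heart the vertex $1$. Let $\mathcal L$ be its Laplacian tensor and, for $r=0,1,\ldots,d$, let $f_r(\lambda)=(\lambda-d)(1-\lambda)^{k-1}+r$. Then: (1) A real number $\lambda\neq 1$ is an H-eigenvalue of $\mathcal L$ if and only if it is a real root of $f_r$ for some $r\in\{0,1,\ldots,d\}$. (2) If $\lambda\neq1$ is a real root of $f_r$, then, up to a nonzero constant multiple, the H-eigenvectors of $\mathcal L$ corresponding to $\lambda$ are exactly the vectors $\mathbf x$ obtained as follows: take $x_1=1-\lambda$; choose any $r$ edges of $G$ and set $x_j=1$ for every vertex $j\neq 1$ lying in one of these $r$ edges; set $x_j=0$ for all other vertices $j$.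
   Context: A $k$-uniform hyperstar of size $d$ is a hypergraph whose vertex set is a disjoint union $V=V_0\cup V_1\cup\cdots\cup V_d$ with $|V_0|=1$, $|V_1|=\cdots=|V_d|=k-1$, and edge set $\{V_0\cup V_i: i\in[d]\}$; the vertex in $V_0$ is the heart. For a $k$-uniform hypergraph with $d_i$ the number of edges containing $i$, the Laplacian tensor $\mathcal L=\mathcal D-\mathcal A$ ($\mathcal D$ diagonal with entries $d_i$, $\mathcal A$ with entries $\frac1{(k-1)!}$ at index tuples forming an edge and $0$ otherwise) satisfies $(\mathcal L\mathbf x^{k-1})_i=d_ix_i^{k-1}-\sum_{e\in E,\,i\in e}\prod_{s\in e\setminus\{i\}}x_s$. A real $\lambda$ is an H-eigenvalue of $\mathcal L$ with H-eigenvector $\mathbf x\in\mathbb R^n\setminus\{0\}$ if $(\mathcal L\mathbf x^{k-1})_i=\lambda x_i^{k-1}$ for all $i\in[n]$. *)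

theory Defs
  imports Main Complex_Main
begin

text \<open>A k-uniform hypergraph on vertex set [n] = {1..n} is given by its edge set
  E :: nat set set.  Vectors in R^n are functions nat => real, only the values
  on {1..n} matter.\<close>

text \<open>k-uniform hyperstar of size d on V = {1..n} with heart 1: d distinct edges,
  each of size k containing 1, pairwise meeting exactly in {1}, covering V.
  (Equivalently V = V0 \<union> V1 \<union> ... \<union> Vd disjoint, V0 = {1}, |Vi| = k-1,
  edges V0 \<union> Vi.)\<close>
definition hyperstar :: "nat \<Rightarrow> nat \<Rightarrow> nat \<Rightarrow> nat set set \<Rightarrow> bool" where
  "hyperstar k d n E \<longleftrightarrow>
     finite E \<and> card E = d \<and>
     (\<forall>e\<in>E. e \<subseteq> {1..n} \<and> card e = k \<and> (1::nat) \<in> e) \<and>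
     (\<forall>e\<in>E. \<forall>e'\<in>E. e \<noteq> e' \<longrightarrow> e \<inter> e' = {1}) \<and>
     \<Union>E = {1..n}"

definition hdeg :: "nat set set \<Rightarrow> nat \<Rightarrow> nat" where
  "hdeg E i = card {e\<in>E. i \<in> e}"

definition lap_apply :: "nat set set \<Rightarrow> nat \<Rightarrow> (nat \<Rightarrow> real) \<Rightarrow> nat \<Rightarrow> real" where
  "lap_apply E k x i =
     real (hdeg E i) * x i ^ (k - 1) - (\<Sum>e\<in>{e\<in>E. i \<in> e}. \<Prod>s\<in>e - {i}. x s)"

definition H_eigenvector :: "nat \<Rightarrow> nat set set \<Rightarrow> nat \<Rightarrow> real \<Rightarrow> (nat \<Rightarrow> real) \<Rightarrow> bool" where
  "H_eigenvector n E k lam x \<longleftrightarrow>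
     (\<exists>i\<in>{1..n}. x i \<noteq> 0) \<and> (\<forall>i\<in>{1..n}. lap_apply E k x i = lam * x i ^ (k - 1))"

definition H_eigenvalue :: "nat \<Rightarrow> nat set set \<Rightarrow> nat \<Rightarrow> real \<Rightarrow> bool" where
  "H_eigenvalue n E k lam \<longleftrightarrow> (\<exists>x. H_eigenvector n E k lam x)"

definition fpoly :: "nat \<Rightarrow> nat \<Rightarrow> nat \<Rightarrow> real \<Rightarrow> real" where
  "fpoly k d r lam = (lam - real d) * (1 - lam) ^ (k - 1) + real r"

definition star_vec :: "real \<Rightarrow> nat set set \<Rightarrow> nat \<Rightarrow> real" where
  "star_vec lam S j = (if j = 1 then 1 - lam else if j \<in> \<Union>S then 1 else 0)"

end

theory Submission
  imports Defs
begin

locale hs =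
  fixes k d n :: nat and E :: "nat set set"
  assumes d2: "d \<ge> 2" and k3: "k \<ge> 3" and oddk: "odd k" and hyp: "hyperstar k d n E"
begin

lemma finE: "finite E" and cardE: "card E = d"
  and esub: "e \<in> E \<Longrightarrow> e \<subseteq> {1..n}" and ecard: "e \<in> E \<Longrightarrow> card e = k"
  and e1: "e \<in> E \<Longrightarrow> (1::nat) \<in> e"
  and disj: "e \<in> E \<Longrightarrow> e' \<in> E \<Longrightarrow> e \<noteq> e' \<Longrightarrow> e \<inter> e' = {1}"
  and cov: "\<Union>E = {1..n}"
  using hyp unfolding hyperstar_def by auto

lemma efin: "e \<in> E \<Longrightarrow> finite e"
  using ecard k3 card.infinite by fastforce

lemma card_e1: "e \<in> E \<Longrightarrow> card (e - {1}) = k - 1"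
  using ecard e1 efin by (simp add: card_Diff_singleton)

lemma card_e1j: "e \<in> E \<Longrightarrow> j \<in> e \<Longrightarrow> j \<noteq> 1 \<Longrightarrow> card (e - {j} - {1}) = k - 2"
proof -
  assume a: "e \<in> E" "j \<in> e" "j \<noteq> 1"
  have "card (e - {j}) = k - 1" using a ecard efin by (simp add: card_Diff_singleton)
  moreover have "1 \<in> e - {j}" using a e1 by auto
  ultimately show ?thesis using a efin by (simp add: card_Diff_singleton)
qed

lemma uniq_edge:
  assumes "j \<in> {1..n}" "j \<noteq> 1"
  obtains e where "e \<in> E" "j \<in> e" "\<And>e'. e' \<in> E \<Longrightarrow> j \<in> e' \<Longrightarrow> e' = e"
proof -
  have "j \<in> \<Union>E" using assms cov by simp
  then obtain e where e: "e \<in> E" "j \<in> e" by blast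
  have "\<And>e'. e' \<in> E \<Longrightarrow> j \<in> e' \<Longrightarrow> e' = e"
  proof (rule ccontr)
    fix e' assume "e' \<in> E" "j \<in> e'" "e' \<noteq> e"
    then have "e' \<inter> e = {1}" using disj e by auto
    then show False using \<open>j \<in> e'\<close> e assms by auto
  qed
  then show ?thesis using that e by blast
qed

lemma prod_const: "finite A \<Longrightarrow> (\<And>s. s \<in> A \<Longrightarrow> x s = (t::real)) \<Longrightarrow> (\<Prod>s\<in>A. x s) = t ^ card A"
  by (simp add: prod.cong)

lemma lap_heart: "lap_apply E k x 1 = real d * x 1 ^ (k - 1) - (\<Sum>e\<in>E. \<Prod>s\<in>e - {1}. x s)"
proof -
  have "{e\<in>E. 1 \<in> e} = E" using e1 by auto
  then show ?thesis unfolding lap_apply_def hdeg_def using cardE by simp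
qed

lemma lap_leaf:
  assumes "e \<in> E" "j \<in> e" "j \<noteq> 1"
  shows "lap_apply E k x j = x j ^ (k - 1) - x 1 * (\<Prod>s\<in>e - {j} - {1}. x s)"
proof -
  have jn: "j \<in> {1..n}" using assms esub by blast
  have "{e'\<in>E. j \<in> e'} = {e}"
  proof -
    obtain e0 where "e0 \<in> E" "j \<in> e0" "\<And>e'. e' \<in> E \<Longrightarrow> j \<in> e' \<Longrightarrow> e' = e0"
      using uniq_edge[OF jn assms(3)] by blast
    then show ?thesis using assms by blast
  qed
  moreover have "(\<Prod>s\<in>e - {j}. x s) = x 1 * (\<Prod>s\<in>e - {j} - {1}. x s)"
    using assms e1 efin by (intro prod.remove) auto
  ultimately show ?thesis unfolding lap_apply_def hdeg_def by simp
qed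

lemma n1: "1 \<in> {1..n}"
proof -
  have "E \<noteq> {}" using cardE d2 by auto
  then obtain e where "e \<in> E" by blast
  then show ?thesis using e1 esub by blast
qed

lemma edge_dichot:
  assumes lam: "lam \<noteq> 1" and ev: "\<forall>i\<in>{1..n}. lap_apply E k x i = lam * x i ^ (k - 1)"
    and x1: "x 1 = c * (1 - lam)" and e: "e \<in> E"
  shows "(\<forall>j\<in>e-{1}. x j = c) \<or> (\<forall>j\<in>e-{1}. x j = 0)"
proof -
  have key: "x j ^ (k - 1) = c * (\<Prod>s\<in>e - {j} - {1}. x s)" if j: "j \<in> e - {1}" for j
  proof -
    have "j \<in> {1..n}" using j e esub by blast
    then have "lap_apply E k x j = lam * x j ^ (k - 1)" using ev by blast
    then have "x j ^ (k - 1) - c * (1 - lam) * (\<Prod>s\<in>e - {j} - {1}. x s) = lam * x j ^ (k - 1)"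
      using lap_leaf[OF e, of j x] j x1 by simp
    then have "(1 - lam) * (x j ^ (k - 1) - c * (\<Prod>s\<in>e - {j} - {1}. x s)) = 0"
      by (simp add: algebra_simps)
    then show ?thesis using lam by simp
  qed
  have kpow: "x j ^ k = c * (\<Prod>s\<in>e - {1}. x s)" if j: "j \<in> e - {1}" for j
  proof -
    have "(\<Prod>s\<in>e - {1}. x s) = x j * (\<Prod>s\<in>e - {1} - {j}. x s)"
      using j efin[OF e] by (intro prod.remove) auto
    moreover have "e - {1} - {j} = e - {j} - {1}" by auto
    moreover have "x j ^ k = x j * x j ^ (k - 1)"
    proof -
      have "k = Suc (k - 1)" using k3 by simp
      then show ?thesis by (metis power_Suc)
    qed
    ultimately show ?thesis using key[OF j] by simp
  qed
  have eq: "x j = x j'" if "j \<in> e - {1}" "j' \<in> e - {1}" for j j'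
  proof -
    have "x j ^ k = x j' ^ k" using kpow that by simp
    then show ?thesis by (metis odd_real_root_power_cancel oddk)
  qed
  have "e - {1} \<noteq> {}"
  proof
    assume "e - {1} = {}"
    then have "card (e - {1}) = card ({}::nat set)" by (rule arg_cong)
    then show False using card_e1[OF e] k3 by simp
  qed
  then obtain j0 where j0: "j0 \<in> e - {1}" by blast
  let ?t = "x j0"
  have allt: "\<And>j. j \<in> e - {1} \<Longrightarrow> x j = ?t" using eq j0 by blast
  have "(\<Prod>s\<in>e - {j0} - {1}. x s) = ?t ^ card (e - {j0} - {1})"
    using allt efin[OF e] by (intro prod_const) auto
  also have "card (e - {j0} - {1}) = k - 2" using card_e1j[OF e] j0 by auto
  finally have A: "?t ^ (k - 1) = c * ?t ^ (k - 2)" using key[OF j0] by simp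
  have B: "?t ^ (k - 1) = ?t * ?t ^ (k - 2)"
  proof -
    have "k - 1 = Suc (k - 2)" using k3 by simp
    then show ?thesis by (metis power_Suc)
  qed
  have h: "?t * ?t ^ (k - 2) = c * ?t ^ (k - 2)" unfolding B[symmetric] by (rule A)
  have aux: "\<And>a p cc :: real. a * p = cc * p \<Longrightarrow> p * (a - cc) = 0" by (simp add: algebra_simps)
  have "?t ^ (k - 2) * (?t - c) = 0" by (rule aux[OF h])
  then have "?t ^ (k - 2) = 0 \<or> ?t - c = 0" by (rule mult_eq_0_iff[THEN iffD1])
  then have "?t = 0 \<or> ?t = c"
  proof
    assume "?t ^ (k - 2) = 0" then show ?thesis by simp
  next
    assume "?t - c = 0" then show ?thesis by simp
  qed
  then show ?thesis using allt by auto
qed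

lemma fwd:
  assumes lam: "lam \<noteq> 1" and H: "H_eigenvector n E k lam x"
  shows "\<exists>c S. c \<noteq> 0 \<and> S \<subseteq> E \<and> fpoly k d (card S) lam = 0 \<and>
            (\<forall>j\<in>{1..n}. x j = c * star_vec lam S j)"
proof -
  have ev: "\<forall>i\<in>{1..n}. lap_apply E k x i = lam * x i ^ (k - 1)"
    and nz: "\<exists>i\<in>{1..n}. x i \<noteq> 0" using H unfolding H_eigenvector_def by auto
  have x1nz: "x 1 \<noteq> 0"
  proof
    assume x10: "x 1 = 0"
    have "x i = 0" if i: "i \<in> {1..n}" for i
    proof (cases "i = 1")
      case True then show ?thesis using x10 by simp
    next
      case False
      obtain e where e: "e \<in> E" "i \<in> e" using uniq_edge[OF i False] by blast
      have "x i ^ (k - 1) = lam * x i ^ (k - 1)"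
        using ev i lap_leaf[OF e False, of x] x10 by simp
      then have "(1 - lam) * x i ^ (k - 1) = 0" by (simp add: algebra_simps)
      then show ?thesis using lam by simp
    qed
    then show False using nz by blast
  qed
  define c where "c = x 1 / (1 - lam)"
  have x1: "x 1 = c * (1 - lam)" using lam unfolding c_def by simp
  have cnz: "c \<noteq> 0" using x1 x1nz by auto
  define S where "S = {e\<in>E. \<forall>j\<in>e-{1}. x j = c}"
  have SE: "S \<subseteq> E" unfolding S_def by auto
  have zero: "\<forall>j\<in>e-{1}. x j = 0" if "e \<in> E" "e \<notin> S" for e
    using edge_dichot[OF lam ev x1 that(1)] that unfolding S_def by auto
  have prodS: "(\<Prod>s\<in>e - {1}. x s) = (if e \<in> S then c ^ (k - 1) else 0)" if e: "e \<in> E" for e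
  proof (cases "e \<in> S")
    case True
    then have "(\<Prod>s\<in>e - {1}. x s) = c ^ card (e - {1})"
      using efin[OF e] unfolding S_def by (intro prod_const) auto
    then show ?thesis using True card_e1[OF e] by simp
  next
    case False
    then have "(\<Prod>s\<in>e - {1}. x s) = 0 ^ card (e - {1})"
      using efin[OF e] zero[OF e False] by (intro prod_const) auto
    then show ?thesis using False card_e1[OF e] k3 by simp
  qed
  have "(\<Sum>e\<in>E. \<Prod>s\<in>e - {1}. x s) = (\<Sum>e\<in>E. if e \<in> S then c ^ (k - 1) else 0)"
    using prodS by (rule sum.cong[OF refl])
  also have "\<dots> = real (card S) * c ^ (k - 1)"
    using SE finE by (simp add: sum.If_cases Int_absorb1 Int_commute)
  finally have sumv: "(\<Sum>e\<in>E. \<Prod>s\<in>e - {1}. x s) = real (card S) * c ^ (k - 1)" .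
  have "lap_apply E k x 1 = lam * x 1 ^ (k - 1)" using ev n1 by blast
  then have "real d * (c * (1 - lam)) ^ (k - 1) - real (card S) * c ^ (k - 1)
      = lam * (c * (1 - lam)) ^ (k - 1)" using lap_heart[of x] sumv x1 by simp
  then have "real d * (c ^ (k - 1) * (1 - lam) ^ (k - 1)) - real (card S) * c ^ (k - 1)
      = lam * (c ^ (k - 1) * (1 - lam) ^ (k - 1))" by (simp only: power_mult_distrib)
  then have "c ^ (k - 1) * ((lam - real d) * (1 - lam) ^ (k - 1) + real (card S)) = 0"
    by (simp add: algebra_simps)
  then have fp: "fpoly k d (card S) lam = 0" using cnz unfolding fpoly_def by simp
  have shape: "x j = c * star_vec lam S j" if j: "j \<in> {1..n}" for j
  proof (cases "j = 1")
    case True then show ?thesis using x1 unfolding star_vec_def by simp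
  next
    case False
    obtain e where e: "e \<in> E" "j \<in> e" and u: "\<And>e'. e' \<in> E \<Longrightarrow> j \<in> e' \<Longrightarrow> e' = e"
      using uniq_edge[OF j False] by blast
    show ?thesis
    proof (cases "e \<in> S")
      case True
      then show ?thesis using e False unfolding star_vec_def S_def by auto
    next
      case nS: False
      have "j \<notin> \<Union>S" using u SE nS by blast
      then show ?thesis using zero[OF e(1) nS] e False unfolding star_vec_def by auto
    qed
  qed
  show ?thesis using cnz SE fp shape by blast
qed

lemma bwd:
  assumes lam: "lam \<noteq> 1" and cnz: "c \<noteq> 0" and SE: "S \<subseteq> E"
    and fp: "fpoly k d (card S) lam = 0"
  shows "H_eigenvector n E k lam (\<lambda>j. c * star_vec lam S j)"
proof -
  define x where "x = (\<lambda>j. c * star_vec lam S j)"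
  have x1: "x 1 = c * (1 - lam)" unfolding x_def star_vec_def by simp
  have inS: "x j = c" if "e \<in> S" "j \<in> e" "j \<noteq> 1" for e j
    using that unfolding x_def star_vec_def by auto
  have notS: "x j = 0" if "e \<in> E" "e \<notin> S" "j \<in> e" "j \<noteq> 1" for e j
  proof -
    have "j \<notin> \<Union>S"
    proof
      assume "j \<in> \<Union>S"
      then obtain e' where "e' \<in> S" "j \<in> e'" by blast
      then have "e' \<inter> e = {1}" using disj SE that by blast
      then show False using that \<open>j \<in> e'\<close> by auto
    qed
    then show ?thesis using that unfolding x_def star_vec_def by auto
  qed
  have prodS: "(\<Prod>s\<in>e - {1}. x s) = (if e \<in> S then c ^ (k - 1) else 0)" if e: "e \<in> E" for e
  proof (cases "e \<in> S")
    case True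
    then have "(\<Prod>s\<in>e - {1}. x s) = c ^ card (e - {1})"
      using efin[OF e] inS by (intro prod_const) auto
    then show ?thesis using True card_e1[OF e] by simp
  next
    case False
    then have "(\<Prod>s\<in>e - {1}. x s) = 0 ^ card (e - {1})"
      using efin[OF e] notS[OF e False] by (intro prod_const) auto
    then show ?thesis using False card_e1[OF e] k3 by simp
  qed
  have "(\<Sum>e\<in>E. \<Prod>s\<in>e - {1}. x s) = (\<Sum>e\<in>E. if e \<in> S then c ^ (k - 1) else 0)"
    using prodS by (rule sum.cong[OF refl])
  also have "\<dots> = real (card S) * c ^ (k - 1)"
    using SE finE by (simp add: sum.If_cases Int_absorb1 Int_commute)
  finally have sumv: "(\<Sum>e\<in>E. \<Prod>s\<in>e - {1}. x s) = real (card S) * c ^ (k - 1)" .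
  have cS: "real (card S) = (real d - lam) * (1 - lam) ^ (k - 1)"
    using fp unfolding fpoly_def by (simp add: algebra_simps)
  have eq: "lap_apply E k x i = lam * x i ^ (k - 1)" if i: "i \<in> {1..n}" for i
  proof (cases "i = 1")
    case True
    have "lap_apply E k x 1 = real d * (c * (1 - lam)) ^ (k - 1) - real (card S) * c ^ (k - 1)"
      using lap_heart[of x] sumv x1 by simp
    also have "\<dots> = lam * (c * (1 - lam)) ^ (k - 1)"
      unfolding cS power_mult_distrib by (simp add: algebra_simps)
    finally show ?thesis using True x1 by simp
  next
    case False
    obtain e where e: "e \<in> E" "i \<in> e" using uniq_edge[OF i False] by blast
    have km: "k - 1 = Suc (k - 2)" using k3 by simp
    show ?thesis
    proof (cases "e \<in> S")
      case True
      have "(\<Prod>s\<in>e - {i} - {1}. x s) = c ^ card (e - {i} - {1})"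
        using efin[OF e(1)] inS[OF True] by (intro prod_const) auto
      then have "(\<Prod>s\<in>e - {i} - {1}. x s) = c ^ (k - 2)" using card_e1j[OF e False] by simp
      then have "lap_apply E k x i = c ^ (k - 1) - c * (1 - lam) * c ^ (k - 2)"
        using lap_leaf[OF e False, of x] inS[OF True e(2) False] x1 by simp
      also have "\<dots> = lam * c ^ (k - 1)" unfolding km by (simp add: algebra_simps)
      finally show ?thesis using inS[OF True e(2) False] by simp
    next
      case nS: False
      have "(\<Prod>s\<in>e - {i} - {1}. x s) = 0 ^ card (e - {i} - {1})"
        using efin[OF e(1)] notS[OF e(1) nS] by (intro prod_const) auto
      then have "(\<Prod>s\<in>e - {i} - {1}. x s) = 0" using card_e1j[OF e False] k3 by simp
      then show ?thesis using lap_leaf[OF e False, of x] notS[OF e(1) nS e(2) False] k3 by simp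
    qed
  qed
  have "x 1 \<noteq> 0" using x1 cnz lam by simp
  then show ?thesis using eq n1 unfolding H_eigenvector_def x_def by blast
qed


end

theorem proposition5p1:
  fixes k d n :: nat and E :: "nat set set"
  assumes "k \<ge> 3" and "odd k" and "d \<ge> 2" and "hyperstar k d n E"
  shows "(\<forall>lam::real. lam \<noteq> 1 \<longrightarrow>
            (H_eigenvalue n E k lam \<longleftrightarrow> (\<exists>r\<in>{0..d}. fpoly k d r lam = 0)))
       \<and> (\<forall>(lam::real) (r::nat). lam \<noteq> 1 \<longrightarrow> r \<le> d \<longrightarrow> fpoly k d r lam = 0 \<longrightarrow>
            (\<forall>x::nat \<Rightarrow> real. (\<forall>j. j \<notin> {1..n} \<longrightarrow> x j = 0) \<longrightarrow>
              (H_eigenvector n E k lam x \<longleftrightarrow>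
                (\<exists>c::real. c \<noteq> 0 \<and> (\<exists>S\<subseteq>E. card S = r \<and> (\<forall>j. x j = c * star_vec lam S j))))))"
proof -
  interpret hs k d n E using assms by unfold_locales auto
  have P1: "H_eigenvalue n E k lam \<longleftrightarrow> (\<exists>r\<in>{0..d}. fpoly k d r lam = 0)" if lam: "lam \<noteq> 1" for lam
  proof
    assume "H_eigenvalue n E k lam"
    then obtain x where "H_eigenvector n E k lam x" unfolding H_eigenvalue_def by blast
    then obtain c S where "S \<subseteq> E" "fpoly k d (card S) lam = 0" using fwd[OF lam] by blast
    moreover have "card S \<le> d" using \<open>S \<subseteq> E\<close> finE cardE card_mono by blast
    ultimately show "\<exists>r\<in>{0..d}. fpoly k d r lam = 0" by auto
  next
    assume "\<exists>r\<in>{0..d}. fpoly k d r lam = 0"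
    then obtain r where r: "r \<le> d" "fpoly k d r lam = 0" by auto
    have "r \<le> card E" using r cardE by simp
    then obtain S where "S \<subseteq> E" "card S = r" "finite S" by (rule obtain_subset_with_card_n)
    then have "H_eigenvector n E k lam (\<lambda>j. 1 * star_vec lam S j)" using bwd[OF lam, of 1 S] r by simp
    then show "H_eigenvalue n E k lam" unfolding H_eigenvalue_def by blast
  qed
  have P2: "H_eigenvector n E k lam x \<longleftrightarrow>
      (\<exists>c::real. c \<noteq> 0 \<and> (\<exists>S\<subseteq>E. card S = r \<and> (\<forall>j. x j = c * star_vec lam S j)))"
    if lam: "lam \<noteq> 1" and fr: "fpoly k d r lam = 0" and out: "\<forall>j. j \<notin> {1..n} \<longrightarrow> x j = 0"
    for lam r x
  proof
    assume "H_eigenvector n E k lam x"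
    then obtain c S where cS: "c \<noteq> 0" "S \<subseteq> E" "fpoly k d (card S) lam = 0"
      "\<forall>j\<in>{1..n}. x j = c * star_vec lam S j" using fwd[OF lam] by blast
    have "real (card S) = real r" using cS(3) fr unfolding fpoly_def by linarith
    then have cr: "card S = r" by simp
    have "x j = c * star_vec lam S j" for j
    proof (cases "j \<in> {1..n}")
      case True then show ?thesis using cS by blast
    next
      case False
      have "j \<notin> \<Union>S" using False cS(2) cov by blast
      moreover have "j \<noteq> 1" using False n1 by blast
      ultimately show ?thesis using out False unfolding star_vec_def by simp
    qed
    then show "\<exists>c::real. c \<noteq> 0 \<and> (\<exists>S\<subseteq>E. card S = r \<and> (\<forall>j. x j = c * star_vec lam S j))"
      using cS cr by blast
  next
    assume "\<exists>c::real. c \<noteq> 0 \<and> (\<exists>S\<subseteq>E. card S = r \<and> (\<forall>j. x j = c * star_vec lam S j))"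
    then obtain c S where cS: "c \<noteq> 0" "S \<subseteq> E" "card S = r" "\<forall>j. x j = c * star_vec lam S j" by blast
    have "x = (\<lambda>j. c * star_vec lam S j)" using cS(4) by auto
    then show "H_eigenvector n E k lam x" using bwd[OF lam cS(1,2)] cS(3) fr by simp
  qed
  show ?thesis
  proof (intro conjI allI impI)
    fix lam :: real assume "lam \<noteq> 1"
    then show "H_eigenvalue n E k lam \<longleftrightarrow> (\<exists>r\<in>{0..d}. fpoly k d r lam = 0)" by (rule P1)
  next
    fix lam :: real and r :: nat and x :: "nat \<Rightarrow> real"
    assume a: "lam \<noteq> 1" "r \<le> d" "fpoly k d r lam = 0" "\<forall>j. j \<notin> {1..n} \<longrightarrow> x j = 0"
    show "H_eigenvector n E k lam x \<longleftrightarrow>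
                (\<exists>c::real. c \<noteq> 0 \<and> (\<exists>S\<subseteq>E. card S = r \<and> (\<forall>j. x j = c * star_vec lam S j)))"
      by (rule P2[OF a(1) a(3) a(4)])
  qed
qed

end
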